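(* Let $p=p_1\otimes\cdots\otimes p_L\in B_{\lambda_1}\otimes\cdots\otimes B_{\lambda_L}$ be any state. For $M_1,\dots,M_n\ge0$ let $$p_{\rm vac}=(1\otimes2\otimes\cdots\otimes n)^{\otimes M_n}\otimes\cdots\otimes(1\otimes2)^{\otimes M_2}\otimes 1^{\otimes M_1}\in B_1^{\otimes L_0},$$ where a letter $a$ denotes the element of $B_1$ with $x_a=1$, $L_0=\sum_{b=1}^n bM_b$ and $L_1=\sum_{b=2}^n(b-1)M_b$. Then, for $M_1,\dots,M_n$ sufficiently large, for all $1\le k\le L$ and $1\le i\le n+1$, $$\rho_i(p_{\rm vac}\otimes p_1\otimes\cdots\otimes p_k)=\rho_i(p_{\rm vac})+L_1k+\rho_i(p_1\otimes\cdots\otimes p_k).$$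
   Context: Fix $n\ge1$. For $l\ge1$ let $B_l=\{x=(x_1,\dots,x_{n+1})\in\mathbb Z_{\ge0}^{n+1}: \sum_i x_i=l\}$ and $u_l=(l,0,\dots,0)\in B_l$. Indices of $x$ are read modulo $n+1$. For $x\in B_l,y\in B_m$ and $i\in\mathbb Z$ put $Q_i(x\otimes y)=\min_{1\le k\le n+1}\big(\sum_{j=1}^{k-1}x_{i+j}+\sum_{j=k+1}^{n+1}y_{i+j}\big)$. The combinatorial $R$ is the map $B_l\otimes B_m\to B_m\otimes B_l$, $x\otimes y\mapsto\tilde y\otimes\tilde x$, $\tilde x_i=x_i+Q_i-Q_{i-1}$, $\tilde y_i=y_i+Q_{i-1}-Q_i$ ($Q_j=Q_j(x\otimes y)$); write $x\otimes y\simeq\tilde y\otimes\tilde x$. Box-ball system: for a state $q=q_1\otimes\cdots\otimes q_K\in B_{\kappa_1}\otimes\cdots\otimes B_{\kappa_K}$ and $l\ge1$ let $v_0=u_l$ and recursively $v_{j-1}\otimes q_j\simeq q'_j\otimes v_j$; then $T_l(q)=q'_1\otimes\cdots\otimes q'_K$. For all sufficiently large $l$, $T_l(q)$ is independent of $l$; this is $T_\infty(q)$. Writing $T_\infty^t(q)=q^t_1\otimes\cdots\otimes q^t_K$, $q^t_j=(x^t_{j,1},\dots,x^t_{j,n+1})$, define $\rho_d(q)=\sum_{j=1}^K(x^0_{j,2}+\cdots+x^0_{j,d})+\sum_{t\ge1}\sum_{j=1}^K(x^t_{j,2}+\cdots+x^t_{j,n+1})$ for $1\le d\le n+1$ (a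 finite sum). *)

theory Defs
  imports Main
begin

text \<open>An element x of B_l (for fixed n) is an int list of length n+1;
  the paper's coordinate x_i (i in Z, read modulo n+1, 1-based) is xc n x i.\<close>

definition inB :: "nat \<Rightarrow> nat \<Rightarrow> int list \<Rightarrow> bool" where
  "inB n l x \<longleftrightarrow> length x = n + 1 \<and> (\<forall>a\<in>set x. a \<ge> 0) \<and> sum_list x = int l"

definition xc :: "nat \<Rightarrow> int list \<Rightarrow> int \<Rightarrow> int" where
  "xc n x i = x ! nat ((i - 1) mod int (n + 1))"

definition uvec :: "nat \<Rightarrow> nat \<Rightarrow> int list" where
  "uvec n l = int l # replicate n 0"

definition Qf :: "nat \<Rightarrow> int list \<Rightarrow> int list \<Rightarrow> int \<Rightarrow> int" where
  "Qf n x y i = Min ((\<lambda>k. (\<Sum>j\<in>{1..<k}. xc n x (i + int j)) + (\<Sum>j\<in>{k+1..n+1}. xc n y (i + int j)))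
                     ` {1..n+1})"

text \<open>Combinatorial R: x \<otimes> y \<mapsto> ytilde \<otimes> xtilde, returned as the pair (ytilde, xtilde).\<close>
definition Rmap :: "nat \<Rightarrow> int list \<Rightarrow> int list \<Rightarrow> int list \<times> int list" where
  "Rmap n x y =
    (map (\<lambda>i. xc n y (int i) + Qf n x y (int i - 1) - Qf n x y (int i)) [1..<n+2],
     map (\<lambda>i. xc n x (int i) + Qf n x y (int i) - Qf n x y (int i - 1)) [1..<n+2])"

text \<open>Carrier pass: v_{j-1} \<otimes> q_j \<simeq> q'_j \<otimes> v_j.\<close>
fun Tcar :: "nat \<Rightarrow> int list \<Rightarrow> int list list \<Rightarrow> int list list" where
  "Tcar n v [] = []"
| "Tcar n v (q # qs) = (case Rmap n v q of (q', v') \<Rightarrow> q' # Tcar n v' qs)"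

definition Tl :: "nat \<Rightarrow> nat \<Rightarrow> int list list \<Rightarrow> int list list" where
  "Tl n l q = Tcar n (uvec n l) q"

definition Tinf :: "nat \<Rightarrow> int list list \<Rightarrow> int list list" where
  "Tinf n q = (THE r. \<exists>L. \<forall>l\<ge>L. Tl n l q = r)"

text \<open>rho_d(q): coordinates a=2..d of the initial state plus coordinates 2..n+1
  of all later time steps (finite sum over the support of the time summand).\<close>
definition rho :: "nat \<Rightarrow> nat \<Rightarrow> int list list \<Rightarrow> int" where
  "rho n d q =
     (\<Sum>j<length q. \<Sum>a\<in>{2..d}. (q ! j) ! (a - 1)) +
     (let g = (\<lambda>t. let qt = (Tinf n ^^ t) q in
                   \<Sum>j<length qt. \<Sum>a\<in>{2..n+1}. (qt ! j) ! (a - 1))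
      in \<Sum>t\<in>{t. 1 \<le> t \<and> g t \<noteq> 0}. g t)"

definition letter :: "nat \<Rightarrow> nat \<Rightarrow> int list" where
  "letter n a = map (\<lambda>i. if i = a then 1 else 0) [1..<n+2]"

definition pvac :: "nat \<Rightarrow> (nat \<Rightarrow> nat) \<Rightarrow> int list list" where
  "pvac n M = concat (map (\<lambda>b. concat (replicate (M b) (map (letter n) [1..<b+1]))) (rev [1..<n+1]))"

definition L1 :: "nat \<Rightarrow> (nat \<Rightarrow> nat) \<Rightarrow> nat" where
  "L1 n M = (\<Sum>b\<in>{2..n}. (b - 1) * M b)"

end

theory Submission
  imports Defs
begin

definition Tm :: "nat \<Rightarrow> int list \<Rightarrow> int list \<Rightarrow> int \<Rightarrow> nat \<Rightarrow> int" where
  "Tm n x y i k = (\<Sum>j\<in>{1..<k}. xc n x (i + int j)) + (\<Sum>j\<in>{k+1..n+1}. xc n y (i + int j))"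

lemma Qf_Tm: "Qf n x y i = Min (Tm n x y i ` {1..n+1})"
  unfolding Qf_def Tm_def by simp

lemma Qf_le: "k \<in> {1..n+1} \<Longrightarrow> Qf n x y i \<le> Tm n x y i k"
  unfolding Qf_Tm by (rule Min_le) auto

lemma Qf_att: "\<exists>k\<in>{1..n+1}. Qf n x y i = Tm n x y i k"
proof -
  have "Min (Tm n x y i ` {1..n+1}) \<in> Tm n x y i ` {1..n+1}"
    by (rule Min_in) auto
  thus ?thesis unfolding Qf_Tm by (metis imageE)
qed

lemma Qf_ge: "(\<And>k. k \<in> {1..n+1} \<Longrightarrow> v \<le> Tm n x y i k) \<Longrightarrow> v \<le> Qf n x y i"
  using Qf_att by metis

lemma Qf_eqI: "k0 \<in> {1..n+1} \<Longrightarrow> Tm n x y i k0 = v \<Longrightarrow> (\<And>k. k \<in> {1..n+1} \<Longrightarrow> v \<le> Tm n x y i k) \<Longrightarrow> Qf n x y i = v"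
  using Qf_ge Qf_le by (metis antisym)

lemma xc_period: "xc n x (z + int (n+1)) = xc n x z"
proof -
  have "z + int (n+1) - 1 = (z - 1) + int (n+1)" by simp
  hence "(z + int (n+1) - 1) mod int (n+1) = (z - 1) mod int (n+1)" by (metis mod_add_self2)
  thus ?thesis unfolding xc_def by simp
qed

lemma Tm_period: "Tm n x y (i + int (n+1)) k = Tm n x y i k"
proof -
  have "\<And>j. xc n x (i + int (n + 1) + int j) = xc n x (i + int j)"
       "\<And>j. xc n y (i + int (n + 1) + int j) = xc n y (i + int j)"
    using xc_period by (metis add.assoc add.commute)+
  thus ?thesis unfolding Tm_def by simp
qed

lemma Qf_period: "Qf n x y (i + int (n+1)) = Qf n x y i"
  unfolding Qf_Tm using Tm_period by simp

definition nn :: "nat \<Rightarrow> int list \<Rightarrow> bool" where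
  "nn n x \<longleftrightarrow> length x = n + 1 \<and> (\<forall>a\<in>set x. a \<ge> 0)"

lemma xc_idx: "nat ((z - 1) mod int (n + 1)) < n + 1"
  by (simp add: nat_less_iff)

lemma xc_nonneg: "nn n x \<Longrightarrow> xc n x z \<ge> 0"
  unfolding nn_def xc_def using xc_idx[of z n] by (metis nth_mem)

lemma Tm_nonneg: "nn n x \<Longrightarrow> nn n y \<Longrightarrow> Tm n x y i k \<ge> 0"
  unfolding Tm_def by (intro add_nonneg_nonneg sum_nonneg) (auto intro: xc_nonneg)

lemma Qf_nonneg: "nn n x \<Longrightarrow> nn n y \<Longrightarrow> Qf n x y i \<ge> 0"
  by (rule Qf_ge) (rule Tm_nonneg)

lemma Tm_shift:
  assumes "1 \<le> k" "k \<le> n"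
  shows "Tm n x y (i - 1) (k+1) = xc n x i + Tm n x y i k - xc n y i"
proof -
  have s1: "(\<Sum>j\<in>{1..<k+1}. xc n x (i - 1 + int j)) = (\<Sum>j\<in>{0..<k}. xc n x (i + int j))"
    using sum.shift_bounds_Suc_ivl[of "\<lambda>j. xc n x (i - 1 + int j)" 0 k] by simp
  have s2: "(\<Sum>j\<in>{0..<k}. xc n x (i + int j)) = xc n x i + (\<Sum>j\<in>{1..<k}. xc n x (i + int j))"
    using sum.atLeast_Suc_lessThan[of 0 k "\<lambda>j. xc n x (i + int j)"] assms by simp
  have s3: "(\<Sum>j\<in>{k+1+1..n+1}. xc n y (i - 1 + int j)) = (\<Sum>j\<in>{k+1..n}. xc n y (i + int j))"
    using sum.shift_bounds_cl_Suc_ivl[of "\<lambda>j. xc n y (i - 1 + int j)" "k+1" n] by simp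
  have s4: "(\<Sum>j\<in>{k+1..n+1}. xc n y (i + int j)) = (\<Sum>j\<in>{k+1..n}. xc n y (i + int j)) + xc n y i"
    using sum.cl_ivl_Suc[of "\<lambda>j. xc n y (i + int j)" "k+1" n] assms xc_period[of n y i]
    by (simp add: add.commute)
  show ?thesis unfolding Tm_def using s1 s2 s3 s4 by simp
qed

lemma Tm_first:
  assumes "1 \<le> n"
  shows "Tm n x y i 1 = Tm n x y (i - 1) 1 - xc n y (i + 1) + xc n y i"
proof -
  have a: "(\<Sum>j\<in>{1+1..n+1}. xc n y (i - 1 + int j)) = (\<Sum>j\<in>{1..n}. xc n y (i + int j))"
    using sum.shift_bounds_cl_Suc_ivl[of "\<lambda>j. xc n y (i - 1 + int j)" 1 n] by simp
  have b: "(\<Sum>j\<in>{1..n}. xc n y (i + int j)) = xc n y (i + 1) + (\<Sum>j\<in>{2..n}. xc n y (i + int j))"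
    using sum.atLeast_Suc_atMost[of 1 n "\<lambda>j. xc n y (i + int j)"] assms by (simp add: numeral_2_eq_2)
  have c: "(\<Sum>j\<in>{2..n+1}. xc n y (i + int j)) = (\<Sum>j\<in>{2..n}. xc n y (i + int j)) + xc n y i"
    using sum.cl_ivl_Suc[of "\<lambda>j. xc n y (i + int j)" 2 n] assms xc_period[of n y i]
    by (simp add: add.commute)
  show ?thesis unfolding Tm_def using a b c by (simp add: numeral_2_eq_2)
qed

lemma Tm_last:
  assumes "1 \<le> n"
  shows "Tm n x y (i - 1) (n+1) = xc n x i + (\<Sum>j\<in>{1..<n}. xc n x (i + int j))"
    and "Tm n x y i (n+1) = (\<Sum>j\<in>{1..<n}. xc n x (i + int j)) + xc n x (i + int n)"
proof -
  have s1: "(\<Sum>j\<in>{1..<n+1}. xc n x (i - 1 + int j)) = (\<Sum>j\<in>{0..<n}. xc n x (i + int j))"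
    using sum.shift_bounds_Suc_ivl[of "\<lambda>j. xc n x (i - 1 + int j)" 0 n] by simp
  have s2: "(\<Sum>j\<in>{0..<n}. xc n x (i + int j)) = xc n x i + (\<Sum>j\<in>{1..<n}. xc n x (i + int j))"
    using sum.atLeast_Suc_lessThan[of 0 n "\<lambda>j. xc n x (i + int j)"] assms by simp
  show "Tm n x y (i - 1) (n+1) = xc n x i + (\<Sum>j\<in>{1..<n}. xc n x (i + int j))"
    unfolding Tm_def using s1 s2 by simp
  show "Tm n x y i (n+1) = (\<Sum>j\<in>{1..<n}. xc n x (i + int j)) + xc n x (i + int n)"
    unfolding Tm_def using sum.atLeastLessThan_Suc[of 1 n "\<lambda>j. xc n x (i + int j)"] assms by simp
qed

lemma Q_y_nonneg:
  assumes "1 \<le> n" "nn n x" "nn n y"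
  shows "Qf n x y i \<le> Qf n x y (i - 1) + xc n y i"
proof -
  obtain k' where k': "k' \<in> {1..n+1}" "Qf n x y (i - 1) = Tm n x y (i - 1) k'" using Qf_att by blast
  show ?thesis
  proof (cases "k' = 1")
    case True
    have "Qf n x y i \<le> Tm n x y i 1" by (rule Qf_le) simp
    also have "\<dots> = Tm n x y (i - 1) 1 - xc n y (i + 1) + xc n y i" by (rule Tm_first[OF assms(1)])
    also have "\<dots> \<le> Tm n x y (i - 1) 1 + xc n y i" using xc_nonneg[OF assms(3)] by simp
    finally show ?thesis using k' True by simp
  next
    case False
    then obtain k where kk: "k' = k + 1" "1 \<le> k" "k \<le> n" using k' by (cases k') auto
    have "Qf n x y i \<le> Tm n x y i k" by (rule Qf_le) (use kk in simp)
    also have "\<dots> = Tm n x y (i - 1) k' - xc n x i + xc n y i" using Tm_shift[OF kk(2,3)] kk by simp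
    also have "\<dots> \<le> Tm n x y (i - 1) k' + xc n y i" using xc_nonneg[OF assms(2)] by simp
    finally show ?thesis using k' by simp
  qed
qed

lemma Q_x_nonneg:
  assumes "1 \<le> n" "nn n x" "nn n y"
  shows "Qf n x y (i - 1) \<le> Qf n x y i + xc n x i"
proof -
  obtain k where k: "k \<in> {1..n+1}" "Qf n x y i = Tm n x y i k" using Qf_att by blast
  show ?thesis
  proof (cases "k = n + 1")
    case True
    have "Qf n x y (i - 1) \<le> Tm n x y (i - 1) (n+1)" by (rule Qf_le) simp
    also have "\<dots> \<le> Tm n x y i (n+1) + xc n x i" 
      using Tm_last[OF assms(1), of x y i] xc_nonneg[OF assms(2)] by simp
    finally show ?thesis using k True by simp
  next
    case False
    hence kk: "1 \<le> k" "k \<le> n" using k by auto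
    have "Qf n x y (i - 1) \<le> Tm n x y (i - 1) (k+1)" by (rule Qf_le) (use kk in simp)
    also have "\<dots> = xc n x i + Tm n x y i k - xc n y i" by (rule Tm_shift[OF kk])
    also have "\<dots> \<le> Tm n x y i k + xc n x i" using xc_nonneg[OF assms(3)] by simp
    finally show ?thesis using k by simp
  qed
qed

lemma xc_nth: "i < n + 1 \<Longrightarrow> xc n y (int i + 1) = y ! i"
  unfolding xc_def by simp

lemma xc_nth': "1 \<le> i \<Longrightarrow> i \<le> n + 1 \<Longrightarrow> xc n y (int i) = y ! (i - 1)"
  using xc_nth[of "i - 1" n y] by (simp add: of_nat_diff)

lemma Rfst_nth: "i < n + 1 \<Longrightarrow> fst (Rmap n x y) ! i = y ! i + Qf n x y (int i) - Qf n x y (int i + 1)"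
  unfolding Rmap_def using xc_nth[of i n y] by (simp del: upt_Suc add: add.commute)

lemma Rsnd_nth: "i < n + 1 \<Longrightarrow> snd (Rmap n x y) ! i = x ! i + Qf n x y (int i + 1) - Qf n x y (int i)"
  unfolding Rmap_def using xc_nth[of i n x] by (simp del: upt_Suc add: add.commute)

lemma Rlen: "length (fst (Rmap n x y)) = n + 1" "length (snd (Rmap n x y)) = n + 1"
  unfolding Rmap_def by simp_all

lemma nn_iff: "nn n x \<longleftrightarrow> length x = n + 1 \<and> (\<forall>i<n+1. x ! i \<ge> 0)"
  unfolding nn_def by (auto simp: all_set_conv_all_nth)

lemma R_nn:
  assumes "1 \<le> n" "nn n x" "nn n y"
  shows "nn n (fst (Rmap n x y))" "nn n (snd (Rmap n x y))"
proof -
  show "nn n (fst (Rmap n x y))" unfolding nn_iff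
  proof (intro conjI allI impI)
    fix i assume i: "i < n + 1"
    have "Qf n x y (int i + 1) \<le> Qf n x y (int i + 1 - 1) + xc n y (int i + 1)"
      by (rule Q_y_nonneg[OF assms])
    thus "fst (Rmap n x y) ! i \<ge> 0" using Rfst_nth[OF i] xc_nth[OF i] by simp
  qed (simp add: Rlen)
  show "nn n (snd (Rmap n x y))" unfolding nn_iff
  proof (intro conjI allI impI)
    fix i assume i: "i < n + 1"
    have "Qf n x y (int i + 1 - 1) \<le> Qf n x y (int i + 1) + xc n x (int i + 1)"
      by (rule Q_x_nonneg[OF assms])
    thus "snd (Rmap n x y) ! i \<ge> 0" using Rsnd_nth[OF i] xc_nth[OF i] by simp
  qed (simp add: Rlen)
qed

lemma sum_list_upt: "length y = n + 1 \<Longrightarrow> sum_list y = (\<Sum>i<n+1. y ! i)"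
  by (simp add: sum_list_sum_nth lessThan_atLeast0)

lemma telesc: "(\<Sum>i\<in>{1..<n+2}. f (int i - 1) - f (int i)) = f 0 - (f (int (n+1)) :: int)"
proof -
  have "(\<Sum>i\<in>{1..<n+2}. f (int i - 1) - f (int i)) = (\<Sum>i\<in>{0..<n+1}. f (int i) - f (int (Suc i)))"
    using sum.shift_bounds_Suc_ivl[of "\<lambda>i. f (int i - 1) - f (int i)" 0 "n+1"] by simp
  also have "\<dots> = - (\<Sum>i\<in>{0..<n+1}. f (int (Suc i)) - f (int i))"
    by (simp add: sum_negf[symmetric])
  also have "\<dots> = f 0 - f (int (n+1))"
    using sum_Suc_diff'[of 0 "n+1" "\<lambda>i. f (int i)"] by simp
  finally show ?thesis .
qed

lemma sum_xc: "length y = n + 1 \<Longrightarrow> (\<Sum>i\<in>{1..<n+2}. xc n y (int i)) = sum_list y"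
proof -
  assume l: "length y = n + 1"
  have "(\<Sum>i\<in>{1..<n+2}. xc n y (int i)) = (\<Sum>i\<in>{0..<n+1}. xc n y (int (Suc i)))"
    using sum.shift_bounds_Suc_ivl[of "\<lambda>i. xc n y (int i)" 0 "n+1"] by simp
  also have "\<dots> = (\<Sum>i\<in>{0..<n+1}. y ! i)"
  proof (rule sum.cong)
    fix i assume "i \<in> {0..<n+1}"
    thus "xc n y (int (Suc i)) = y ! i" using xc_nth[of i n y] by (simp add: add.commute)
  qed simp
  finally show ?thesis using sum_list_upt[OF l] by (simp add: lessThan_atLeast0)
qed

lemma R_sum:
  assumes "length x = n + 1" "length y = n + 1"
  shows "sum_list (fst (Rmap n x y)) = sum_list y" "sum_list (snd (Rmap n x y)) = sum_list x"
proof -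
  let ?Q = "Qf n x y"
  have per: "?Q (int (n+1)) = ?Q 0" using Qf_period[of n x y 0] by simp
  have "sum_list (fst (Rmap n x y)) = (\<Sum>i\<in>{1..<n+2}. xc n y (int i) + (?Q (int i - 1) - ?Q (int i)))"
    unfolding Rmap_def fst_conv sum_set_upt_conv_sum_list_nat[symmetric] set_upt by (simp add: algebra_simps)
  also have "\<dots> = sum_list y" using telesc[of ?Q n] sum_xc[OF assms(2)] per by (simp add: sum.distrib)
  finally show "sum_list (fst (Rmap n x y)) = sum_list y" .
  have "sum_list (snd (Rmap n x y)) = (\<Sum>i\<in>{1..<n+2}. xc n x (int i) - (?Q (int i - 1) - ?Q (int i)))"
    unfolding Rmap_def snd_conv sum_set_upt_conv_sum_list_nat[symmetric] set_upt by (simp add: algebra_simps)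
  also have "\<dots> = sum_list x" using telesc[of ?Q n] sum_xc[OF assms(1)] per by (simp add: sum_subtractf)
  finally show "sum_list (snd (Rmap n x y)) = sum_list x" .
qed

definition balls :: "nat \<Rightarrow> int list \<Rightarrow> int" where
  "balls n x = (\<Sum>a\<in>{2..n+1}. x ! (a - 1))"

lemma sum_balls: "length x = n + 1 \<Longrightarrow> sum_list x = x ! 0 + balls n x"
proof -
  assume l: "length x = n + 1"
  have b: "balls n x = (\<Sum>i\<in>{1..n}. x ! i)"
    unfolding balls_def using sum.shift_bounds_cl_Suc_ivl[of "\<lambda>a. x ! (a - 1)" 1 n]
    by (simp add: numeral_2_eq_2)
  have "sum_list x = (\<Sum>i\<in>{0..n}. x ! i)" using sum_list_upt[OF l]
    by (simp add: lessThan_Suc_atMost atLeast0AtMost)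
  also have "\<dots> = x ! 0 + (\<Sum>i\<in>{1..n}. x ! i)"
    using sum.atLeast_Suc_atMost[of 0 n "\<lambda>i. x ! i"] by simp
  finally show ?thesis using b by simp
qed

lemma cycle_step: "(\<Sum>j\<in>{1..n+1}. xc n y (i + 1 + int j)) = (\<Sum>j\<in>{1..n+1}. xc n y (i + int j))"
proof -
  have a: "(\<Sum>j\<in>{1..n+1}. xc n y (i + 1 + int j)) = (\<Sum>j\<in>{Suc 1..Suc (n+1)}. xc n y (i + int j))"
    using sum.shift_bounds_cl_Suc_ivl[of "\<lambda>j. xc n y (i + int j)" 1 "n+1"] by (simp add: add.assoc)
  have b: "(\<Sum>j\<in>{Suc 1..Suc (n+1)}. xc n y (i + int j)) = (\<Sum>j\<in>{2..n+1}. xc n y (i + int j)) + xc n y (i + int (n+2))"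
    using sum.cl_ivl_Suc[of "\<lambda>j. xc n y (i + int j)" 2 "n+1"] by (simp add: numeral_2_eq_2)
  have c: "(\<Sum>j\<in>{1..n+1}. xc n y (i + int j)) = xc n y (i + 1) + (\<Sum>j\<in>{2..n+1}. xc n y (i + int j))"
    using sum.atLeast_Suc_atMost[of 1 "n+1" "\<lambda>j. xc n y (i + int j)"] by (simp add: numeral_2_eq_2)
  have d: "xc n y (i + int (n+2)) = xc n y (i + 1)"
    using xc_period[of n y "i+1"] by (simp add: algebra_simps)
  show ?thesis using a b c d by simp
qed

lemma cycle_sum:
  assumes "length y = n + 1"
  shows "(\<Sum>j\<in>{1..n+1}. xc n y (i + int j)) = sum_list y"
proof (induction i rule: int_induct[where k = 0])
  case base
  have "{1..n+1} = {1..<n+2}" by auto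
  thus ?case using sum_xc[OF assms] by simp
next
  case (step1 i)
  thus ?case using cycle_step[of n y i] by simp
next
  case (step2 i)
  thus ?case using cycle_step[of n y "i - 1"] by simp
qed

lemma Tm1_le:
  assumes "nn n y"
  shows "Tm n x y i 1 \<le> sum_list y"
proof -
  have "Tm n x y i 1 = (\<Sum>j\<in>{2..n+1}. xc n y (i + int j))" unfolding Tm_def by (simp add: numeral_2_eq_2)
  also have "\<dots> \<le> (\<Sum>j\<in>{1..n+1}. xc n y (i + int j))"
    by (rule sum_mono2) (auto intro: xc_nonneg[OF assms])
  also have "\<dots> = sum_list y" using cycle_sum assms unfolding nn_def by blast
  finally show ?thesis .
qed

lemma Tm_ge_pos1:
  assumes "nn n x" "nn n y" "j \<in> {1..<k}" "(i + int j - 1) mod int (n+1) = 0"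
  shows "Tm n x y i k \<ge> x ! 0"
proof -
  have e: "xc n x (i + int j) = x ! 0" unfolding xc_def using assms(4) by simp
  have "xc n x (i + int j) \<le> (\<Sum>j\<in>{1..<k}. xc n x (i + int j))"
    by (rule member_le_sum[OF assms(3)]) (auto intro: xc_nonneg[OF assms(1)])
  hence "x ! 0 \<le> (\<Sum>j\<in>{1..<k}. xc n x (i + int j))" using e by simp
  moreover have "(\<Sum>j\<in>{k+1..n+1}. xc n y (i + int j)) \<ge> 0"
    by (rule sum_nonneg) (auto intro: xc_nonneg[OF assms(2)])
  ultimately show ?thesis unfolding Tm_def by simp
qed

lemma balls_alt: "balls n x = (\<Sum>i\<in>{1..<n+1}. x ! i)"
  unfolding balls_def using sum.shift_bounds_cl_Suc_ivl[of "\<lambda>a. x ! (a - 1)" 1 n]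
  by (simp add: numeral_2_eq_2 atLeastLessThanSuc_atLeastAtMost)

lemma balls_le_sum: "nn n y \<Longrightarrow> balls n y \<le> sum_list y"
  using sum_balls[of y n] unfolding nn_iff by force

lemma xc_upd: 
  assumes "length x = n + 1"
  shows "xc n (x[0 := v]) z = xc n x z + (if (z - 1) mod int (n+1) = 0 then v - x ! 0 else 0)"
proof -
  have lt: "nat ((z - 1) mod int (n + 1)) < length x" using xc_idx[of z n] assms by simp
  have ge: "(z - 1) mod int (n + 1) \<ge> 0" by simp
  have "nat ((z - 1) mod int (n + 1)) = 0 \<longleftrightarrow> (z - 1) mod int (n + 1) = 0" using ge by linarith
  thus ?thesis unfolding xc_def using lt by (auto simp: nth_list_update)
qed

lemma Q_shift:
  assumes "nn n x" "nn n y" "x ! 0 \<ge> sum_list y" "c \<ge> 0"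
  shows "Qf n (x[0 := x ! 0 + c]) y i = Qf n x y i"
proof -
  let ?x' = "x[0 := x ! 0 + c]"
  define D where "D k = (\<Sum>j\<in>{1..<k}. (if (i + int j - 1) mod int (n+1) = 0 then c else 0))" for k
  have lx: "length x = n + 1" using assms(1) nn_def by auto
  have xu: "xc n ?x' z = xc n x z + (if (z - 1) mod int (n+1) = 0 then c else 0)" for z
    using xc_upd[OF lx, of "x ! 0 + c" z] by simp
  have TD: "Tm n ?x' y i k = Tm n x y i k + D k" for k
    unfolding Tm_def D_def xu by (simp add: sum.distrib)
  have D0: "D k \<ge> 0" for k unfolding D_def using assms(4) by (auto intro: sum_nonneg)
  have D1: "D 1 = 0" unfolding D_def by simp
  have le1: "Qf n x y i \<le> Qf n ?x' y i"
  proof (rule Qf_ge)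
    fix k assume "k \<in> {1..n+1}"
    hence "Qf n x y i \<le> Tm n x y i k" by (rule Qf_le)
    thus "Qf n x y i \<le> Tm n ?x' y i k" using TD[of k] D0[of k] by simp
  qed
  obtain k0 where k0: "k0 \<in> {1..n+1}" "Qf n x y i = Tm n x y i k0" using Qf_att by blast
  have le2: "Qf n ?x' y i \<le> Qf n x y i"
  proof (cases "D k0 = 0")
    case True thus ?thesis using Qf_le[OF k0(1), of ?x' y i] TD k0 by simp
  next
    case False
    then obtain j where j: "j \<in> {1..<k0}" "(i + int j - 1) mod int (n+1) = 0"
    proof -
      from False obtain j where "j \<in> {1..<k0}" "(if (i + int j - 1) mod int (n+1) = 0 then c else 0) \<noteq> 0"
        unfolding D_def using sum.not_neutral_contains_not_neutral by blast
      thus ?thesis using that by (auto split: if_splits)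
    qed
    have "Tm n x y i k0 \<ge> x ! 0" by (rule Tm_ge_pos1[OF assms(1,2) j])
    moreover have "Tm n x y i 1 \<le> sum_list y" by (rule Tm1_le[OF assms(2)])
    moreover have "Qf n ?x' y i \<le> Tm n ?x' y i 1" by (rule Qf_le) simp
    ultimately show ?thesis using TD[of 1] D1 k0 assms(3) by simp
  qed
  show ?thesis using le1 le2 by simp
qed

lemma R_shift:
  assumes "nn n x" "nn n y" "x ! 0 \<ge> sum_list y" "c \<ge> 0"
  shows "Rmap n (x[0 := x ! 0 + c]) y =
     (fst (Rmap n x y), (snd (Rmap n x y))[0 := snd (Rmap n x y) ! 0 + c])"
proof -
  let ?x' = "x[0 := x ! 0 + c]"
  have Q: "Qf n ?x' y = Qf n x y" using Q_shift[OF assms] by auto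
  have lx: "length x = n + 1" using assms(1) nn_def by auto
  have f: "fst (Rmap n ?x' y) = fst (Rmap n x y)" unfolding Rmap_def Q by simp
  have s: "snd (Rmap n ?x' y) = (snd (Rmap n x y))[0 := snd (Rmap n x y) ! 0 + c]"
  proof (rule nth_equalityI)
    show "length (snd (Rmap n ?x' y)) = length ((snd (Rmap n x y))[0 := snd (Rmap n x y) ! 0 + c])"
      by (simp add: Rlen)
    fix i assume "i < length (snd (Rmap n ?x' y))"
    hence i: "i < n + 1" by (simp add: Rlen)
    show "snd (Rmap n ?x' y) ! i = (snd (Rmap n x y))[0 := snd (Rmap n x y) ! 0 + c] ! i"
      using Rsnd_nth[OF i, of ?x' y] Rsnd_nth[OF i, of x y] Q i lx Rlen(2)[of n x y]
      by (cases "i = 0") (auto simp: nth_list_update)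
  qed
  show ?thesis using f s by (metis prod.collapse)
qed

lemma R_car0:
  assumes "nn n x" "nn n y"
  shows "snd (Rmap n x y) ! 0 \<ge> x ! 0 - sum_list y"
proof -
  have "Qf n x y 1 \<ge> 0" by (rule Qf_nonneg[OF assms])
  moreover have "Qf n x y 0 \<le> Tm n x y 0 1" by (rule Qf_le) simp
  moreover have "Tm n x y 0 1 \<le> sum_list y" by (rule Tm1_le[OF assms(2)])
  ultimately show ?thesis using Rsnd_nth[of 0 n x y] by simp
qed

lemma R_balls_le:
  assumes "nn n x" "nn n y" "x ! 0 \<ge> sum_list y"
  shows "balls n (fst (Rmap n x y)) \<le> balls n x"
proof -
  have ly: "length y = n + 1" and lx: "length x = n + 1" using assms nn_def by auto
  have Q0: "Qf n x y 0 \<ge> balls n y"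
  proof (rule Qf_ge)
    fix k assume k: "k \<in> {1..n+1}"
    show "balls n y \<le> Tm n x y 0 k"
    proof (cases "k = 1")
      case True
      have "Tm n x y 0 1 = (\<Sum>j\<in>{2..n+1}. xc n y (int j))" unfolding Tm_def by (simp add: numeral_2_eq_2)
      also have "\<dots> = balls n y" unfolding balls_def by (rule sum.cong) (auto simp: xc_nth')
      finally show ?thesis using True by simp
    next
      case False
      hence "1 \<in> {1..<k}" using k by auto
      hence "Tm n x y 0 k \<ge> x ! 0" by (intro Tm_ge_pos1[OF assms(1,2)]) auto
      thus ?thesis using balls_le_sum[OF assms(2)] assms(3) by simp
    qed
  qed
  have "Qf n x y 1 \<le> Tm n x y 1 (n+1)" by (rule Qf_le) simp
  also have "Tm n x y 1 (n+1) = (\<Sum>j\<in>{1..<n+1}. xc n x (1 + int j))" unfolding Tm_def by simp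
  also have "\<dots> = balls n x" unfolding balls_alt by (rule sum.cong) (auto simp: xc_nth[unfolded add.commute[of _ 1]])
  finally have Q1: "Qf n x y 1 \<le> balls n x" .
  have "sum_list (fst (Rmap n x y)) = fst (Rmap n x y) ! 0 + balls n (fst (Rmap n x y))"
    by (rule sum_balls) (simp add: Rlen)
  moreover have "sum_list (fst (Rmap n x y)) = sum_list y" by (rule R_sum(1)[OF lx ly])
  moreover have "sum_list y = y ! 0 + balls n y" by (rule sum_balls[OF ly])
  moreover have "fst (Rmap n x y) ! 0 = y ! 0 + Qf n x y 0 - Qf n x y 1" using Rfst_nth[of 0 n x y] by simp
  ultimately show ?thesis using Q0 Q1 by linarith
qed

lemma R_balls_cons:
  assumes "length x = n + 1" "length y = n + 1"
  shows "balls n (fst (Rmap n x y)) + balls n (snd (Rmap n x y)) = balls n x + balls n y"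
proof -
  have "sum_list (fst (Rmap n x y)) = fst (Rmap n x y) ! 0 + balls n (fst (Rmap n x y))"
    by (rule sum_balls) (simp add: Rlen)
  moreover have "sum_list (snd (Rmap n x y)) = snd (Rmap n x y) ! 0 + balls n (snd (Rmap n x y))"
    by (rule sum_balls) (simp add: Rlen)
  moreover note R_sum[OF assms] sum_balls[OF assms(1)] sum_balls[OF assms(2)]
  moreover have "fst (Rmap n x y) ! 0 + snd (Rmap n x y) ! 0 = y ! 0 + x ! 0"
    using Rfst_nth[of 0 n x y] Rsnd_nth[of 0 n x y] by simp
  ultimately show ?thesis by linarith
qed

definition valid :: "nat \<Rightarrow> int list list \<Rightarrow> bool" where
  "valid n qs \<longleftrightarrow> (\<forall>q\<in>set qs. nn n q)"

definition sz :: "int list list \<Rightarrow> int" where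
  "sz qs = sum_list (map sum_list qs)"

lemma nn_sum: "nn n q \<Longrightarrow> sum_list q \<ge> 0"
  unfolding nn_def by (simp add: sum_list_nonneg)

lemma sz_nonneg: "valid n qs \<Longrightarrow> sz qs \<ge> 0"
  unfolding valid_def sz_def by (induction qs) (auto dest: nn_sum)

lemma valid_Cons: "valid n (q # qs) \<longleftrightarrow> nn n q \<and> valid n qs"
  unfolding valid_def by simp

lemma sz_Cons: "sz (q # qs) = sum_list q + sz qs" unfolding sz_def by simp

lemma Tcar_Cons': "Tcar n v (q # qs) = fst (Rmap n v q) # Tcar n (snd (Rmap n v q)) qs"
  by (simp split: prod.split)

lemma Tcar_shift:
  assumes "1 \<le> n"
  shows "nn n v \<Longrightarrow> valid n qs \<Longrightarrow> v ! 0 \<ge> sz qs \<Longrightarrow> c \<ge> 0 \<Longrightarrow>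
    Tcar n (v[0 := v ! 0 + c]) qs = Tcar n v qs"
proof (induction qs arbitrary: v)
  case Nil thus ?case by simp
next
  case (Cons q qs)
  have q: "nn n q" and qs: "valid n qs" using Cons.prems valid_Cons by auto
  have big: "v ! 0 \<ge> sum_list q" using Cons.prems(3) sz_nonneg[OF qs] sz_Cons[of q qs] by simp
  have R: "Rmap n (v[0 := v ! 0 + c]) q = (fst (Rmap n v q), (snd (Rmap n v q))[0 := snd (Rmap n v q) ! 0 + c])"
    by (rule R_shift[OF Cons.prems(1) q big Cons.prems(4)])
  let ?w = "snd (Rmap n v q)"
  have w: "nn n ?w" by (rule R_nn(2)[OF assms Cons.prems(1) q])
  have w0: "?w ! 0 \<ge> sz qs" using R_car0[OF Cons.prems(1) q] Cons.prems(3) sz_Cons[of q qs] by simp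
  have "Tcar n (?w[0 := ?w ! 0 + c]) qs = Tcar n ?w qs" by (rule Cons.IH[OF w qs w0 Cons.prems(4)])
  thus ?case using R by (simp split: prod.splits)
qed

lemma uvec_nn: "nn n (uvec n l)" unfolding nn_def uvec_def by auto

lemma uvec_upd: "l \<ge> L \<Longrightarrow> uvec n l = (uvec n L)[0 := (uvec n L) ! 0 + int (l - L)]"
  unfolding uvec_def by simp

lemma Tl_stable:
  assumes "1 \<le> n" "valid n qs" "l \<ge> nat (sz qs)"
  shows "Tl n l qs = Tl n (nat (sz qs)) qs"
proof -
  let ?L = "nat (sz qs)"
  have b: "uvec n ?L ! 0 \<ge> sz qs" using sz_nonneg[OF assms(2)] by (simp add: uvec_def)
  have "Tl n l qs = Tcar n ((uvec n ?L)[0 := uvec n ?L ! 0 + int (l - ?L)]) qs"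
    unfolding Tl_def using uvec_upd[OF assms(3), of n] by simp
  also have "\<dots> = Tcar n (uvec n ?L) qs"
    by (rule Tcar_shift[OF assms(1) uvec_nn assms(2) b]) simp
  finally show ?thesis unfolding Tl_def .
qed

lemma Tinf_eq:
  assumes "1 \<le> n" "valid n qs" "l \<ge> nat (sz qs)"
  shows "Tinf n qs = Tl n l qs"
proof -
  let ?r = "Tl n (nat (sz qs)) qs"
  have P: "\<exists>L. \<forall>l\<ge>L. Tl n l qs = ?r"
  proof (intro exI allI impI)
    fix l assume "nat (sz qs) \<le> l"
    thus "Tl n l qs = ?r" by (rule Tl_stable[OF assms(1,2)])
  qed
  have U: "r' = ?r" if "\<exists>L. \<forall>l\<ge>L. Tl n l qs = r'" for r'
  proof -
    from that obtain L where L: "\<forall>l\<ge>L. Tl n l qs = r'" by blast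
    have "Tl n (max L (nat (sz qs))) qs = r'" using L by simp
    moreover have "Tl n (max L (nat (sz qs))) qs = ?r" by (rule Tl_stable[OF assms(1,2)]) simp
    ultimately show ?thesis by simp
  qed
  have "Tinf n qs = ?r" unfolding Tinf_def by (rule the_equality[where P = "\<lambda>r. \<exists>L. \<forall>l\<ge>L. Tl n l qs = r", OF P U])
  moreover have "Tl n l qs = ?r" by (rule Tl_stable[OF assms])
  ultimately show ?thesis by simp
qed

lemma Tcar_valid:
  assumes "1 \<le> n"
  shows "nn n v \<Longrightarrow> valid n qs \<Longrightarrow> valid n (Tcar n v qs) \<and> map sum_list (Tcar n v qs) = map sum_list qs"
proof (induction qs arbitrary: v)
  case Nil thus ?case by (simp add: valid_def)
next
  case (Cons q qs)
  have q: "nn n q" and qs: "valid n qs" using Cons.prems valid_Cons by auto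
  have lv: "length v = n + 1" and lq: "length q = n + 1" using Cons.prems(1) q nn_def by auto
  have "valid n (Tcar n (snd (Rmap n v q)) qs) \<and> map sum_list (Tcar n (snd (Rmap n v q)) qs) = map sum_list qs"
    by (rule Cons.IH[OF R_nn(2)[OF assms Cons.prems(1) q] qs])
  thus ?case using R_nn(1)[OF assms Cons.prems(1) q] R_sum(1)[OF lv lq]
    by (simp only: Tcar_Cons' valid_Cons list.map list.inject)
qed

lemma Tinf_valid:
  assumes "1 \<le> n" "valid n qs"
  shows "valid n (Tinf n qs)" "map sum_list (Tinf n qs) = map sum_list qs" "sz (Tinf n qs) = sz qs"
proof -
  have e: "Tinf n qs = Tcar n (uvec n (nat (sz qs))) qs" using Tinf_eq[OF assms] Tl_def by simp
  show "valid n (Tinf n qs)" "map sum_list (Tinf n qs) = map sum_list qs"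
    using Tcar_valid[OF assms(1) uvec_nn assms(2)] e by auto
  thus "sz (Tinf n qs) = sz qs" unfolding sz_def by simp
qed

lemma Tinf_pow_valid:
  assumes "1 \<le> n" "valid n qs"
  shows "valid n ((Tinf n ^^ t) qs) \<and> map sum_list ((Tinf n ^^ t) qs) = map sum_list qs \<and> sz ((Tinf n ^^ t) qs) = sz qs"
  by (induction t) (use Tinf_valid[OF assms(1)] assms(2) in auto)

declare Tcar.simps(2)[simp del] Tcar_Cons'[simp]

definition bsum :: "nat \<Rightarrow> int list list \<Rightarrow> int" where
  "bsum n qs = sum_list (map (balls n) qs)"

lemma balls_nonneg: "nn n x \<Longrightarrow> balls n x \<ge> 0"
  unfolding balls_def nn_iff by (intro sum_nonneg) auto

lemma bsum_nonneg: "valid n qs \<Longrightarrow> bsum n qs \<ge> 0"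
  unfolding bsum_def valid_def by (induction qs) (auto intro!: add_nonneg_nonneg balls_nonneg)

lemma valid_take: "valid n qs \<Longrightarrow> valid n (take j qs)"
  unfolding valid_def by (meson in_set_takeD)

lemma Tcar_pot:
  assumes "1 \<le> n"
  shows "nn n v \<Longrightarrow> valid n qs \<Longrightarrow> v ! 0 \<ge> sz qs \<Longrightarrow>
    bsum n (take (Suc j) (Tcar n v qs)) \<le> balls n v + bsum n (take j qs)"
proof (induction qs arbitrary: v j)
  case Nil thus ?case using balls_nonneg by (simp add: bsum_def)
next
  case (Cons q qs)
  have q: "nn n q" and qs: "valid n qs" using Cons.prems valid_Cons by auto
  have lv: "length v = n + 1" and lq: "length q = n + 1" using Cons.prems(1) q nn_def by auto
  have big: "v ! 0 \<ge> sum_list q" using Cons.prems(3) sz_nonneg[OF qs] sz_Cons[of q qs] by simp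
  let ?w = "snd (Rmap n v q)" and ?o = "fst (Rmap n v q)"
  have w: "nn n ?w" by (rule R_nn(2)[OF assms Cons.prems(1) q])
  have w0: "?w ! 0 \<ge> sz qs" using R_car0[OF Cons.prems(1) q] Cons.prems(3) sz_Cons[of q qs] by simp
  have ob: "balls n ?o \<le> balls n v" by (rule R_balls_le[OF Cons.prems(1) q big])
  have cons: "balls n ?o + balls n ?w = balls n v + balls n q" by (rule R_balls_cons[OF lv lq])
  show ?case
  proof (cases j)
    case 0 thus ?thesis using ob by (simp add: Tcar_Cons' bsum_def)
  next
    case (Suc j')
    have "bsum n (take (Suc j') (Tcar n ?w qs)) \<le> balls n ?w + bsum n (take j' qs)"
      by (rule Cons.IH[OF w qs w0])
    thus ?thesis using Suc cons by (simp add: Tcar_Cons' bsum_def)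
  qed
qed

lemma uvec_balls: "balls n (uvec n l) = 0"
  unfolding balls_def uvec_def by (intro sum.neutral) (auto simp: nth_Cons')

lemma Tinf_pot:
  assumes "1 \<le> n" "valid n qs"
  shows "bsum n (take (Suc j) (Tinf n qs)) \<le> bsum n (take j qs)"
proof -
  have e: "Tinf n qs = Tcar n (uvec n (nat (sz qs))) qs" using Tinf_eq[OF assms] Tl_def by simp
  have b: "uvec n (nat (sz qs)) ! 0 \<ge> sz qs" by (simp add: uvec_def)
  show ?thesis using Tcar_pot[OF assms(1) uvec_nn assms(2) b, of j] e uvec_balls by simp
qed

lemma vanish:
  assumes "1 \<le> n" "valid n qs"
  shows "j \<le> t \<Longrightarrow> bsum n (take j ((Tinf n ^^ t) qs)) = 0"
proof (induction t arbitrary: j)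
  case 0 thus ?case by (simp add: bsum_def)
next
  case (Suc t)
  show ?case
  proof (cases j)
    case 0 thus ?thesis by (simp add: bsum_def)
  next
    case (Suc j')
    have v: "valid n ((Tinf n ^^ t) qs)" using Tinf_pow_valid[OF assms] by blast
    have "bsum n (take (Suc j') (Tinf n ((Tinf n ^^ t) qs))) \<le> bsum n (take j' ((Tinf n ^^ t) qs))"
      by (rule Tinf_pot[OF assms(1) v])
    moreover have "bsum n (take j' ((Tinf n ^^ t) qs)) = 0" using Suc.IH Suc.prems Suc by simp
    moreover have "bsum n (take (Suc j') (Tinf n ((Tinf n ^^ t) qs))) \<ge> 0"
      by (rule bsum_nonneg[OF valid_take[OF Tinf_valid(1)[OF assms(1) v]]])
    ultimately show ?thesis using Suc by simp
  qed
qed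

lemma len_Tinf_pow: "1 \<le> n \<Longrightarrow> valid n qs \<Longrightarrow> length ((Tinf n ^^ t) qs) = length qs"
  using Tinf_pow_valid[of n qs t] by (metis length_map)

lemma vanish_all:
  assumes "1 \<le> n" "valid n qs" "length qs \<le> t"
  shows "bsum n ((Tinf n ^^ t) qs) = 0"
  using vanish[OF assms(1,2) assms(3)] len_Tinf_pow[OF assms(1,2), of t] by simp

definition init :: "nat \<Rightarrow> nat \<Rightarrow> int list list \<Rightarrow> int" where
  "init n d q = (\<Sum>j<length q. \<Sum>a\<in>{2..d}. (q ! j) ! (a - 1))"

lemma g_bsum: "(\<Sum>j<length qt. \<Sum>a\<in>{2..n+1}. (qt ! j) ! (a - 1)) = bsum n qt"
  unfolding bsum_def balls_def by (simp add: sum_list_sum_nth atLeast0LessThan)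

lemma rho_fin:
  assumes "\<And>t. t \<ge> K \<Longrightarrow> bsum n ((Tinf n ^^ t) q) = 0"
  shows "rho n d q = init n d q + (\<Sum>t\<in>{1..<K}. bsum n ((Tinf n ^^ t) q))"
proof -
  let ?G = "\<lambda>t. bsum n ((Tinf n ^^ t) q)"
  have r: "rho n d q = init n d q + (\<Sum>t\<in>{t. 1 \<le> t \<and> ?G t \<noteq> 0}. ?G t)"
    unfolding rho_def init_def Let_def g_bsum by simp
  have "(\<Sum>t\<in>{t. 1 \<le> t \<and> ?G t \<noteq> 0}. ?G t) = (\<Sum>t\<in>{1..<K}. ?G t)"
  proof (rule sum.mono_neutral_left)
    show "{t. 1 \<le> t \<and> ?G t \<noteq> 0} \<subseteq> {1..<K}"
    proof
      fix x assume x: "x \<in> {t. 1 \<le> t \<and> ?G t \<noteq> 0}"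
      have "x < K"
      proof (rule ccontr)
        assume "\<not> x < K" thus False using x assms[of x] by simp
      qed
      thus "x \<in> {1..<K}" using x by simp
    qed
  qed auto
  thus ?thesis using r by simp
qed

definition cell :: "nat \<Rightarrow> nat \<Rightarrow> nat \<Rightarrow> int list" where
  "cell n m a = map (\<lambda>i. (if i = 1 then int m - 1 else 0) + (if i = a then 1 else 0)) [1..<n+2]"

lemma cell_len[simp]: "length (cell n m a) = n + 1" unfolding cell_def by simp

lemma cell_nth: "i < n + 1 \<Longrightarrow> cell n m a ! i = (if i = 0 then int m - 1 else 0) + (if Suc i = a then 1 else 0)"
  unfolding cell_def by (simp del: upt_Suc add: nth_upt)

lemma xc_cell:
  assumes "1 \<le> i" "i \<le> int n + 1" "1 \<le> j" "j \<le> n + 1" "1 \<le> a" "a \<le> n + 1"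
  shows "xc n (cell n m a) (i + int j) = (if i + int j = int n + 2 then int m - 1 else 0)
     + (if i + int j = int a then 1 else 0) + (if i + int j = int a + int n + 1 then 1 else 0)"
proof (cases "i + int j \<le> int n + 1")
  case True
  hence md: "(i + int j - 1) mod int (n+1) = i + int j - 1" using assms by (intro mod_pos_pos_trivial) auto
  have lt: "nat (i + int j - 1) < n + 1" using True assms by auto
  show ?thesis unfolding xc_def md using cell_nth[OF lt, of m a] True assms by auto
next
  case False
  have e: "(i + int j - 1) mod int (n+1) = (i + int j - 1 - int (n+1)) mod int (n+1)"
    using mod_add_self2[of "i + int j - 1 - int (n+1)" "int (n+1)"] by simp
  have md: "(i + int j - 1) mod int (n+1) = i + int j - 1 - int (n+1)" unfolding e using assms False
    by (intro mod_pos_pos_trivial) auto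
  have lt: "nat (i + int j - 1 - int (n+1)) < n + 1" using False assms by auto
  show ?thesis unfolding xc_def md using cell_nth[OF lt, of m a] False assms by auto
qed

lemma sum_ind: "finite A \<Longrightarrow> (\<Sum>j\<in>A. (if int j = c then v else 0)) = (if c \<ge> 0 \<and> nat c \<in> A then v else (0::int))"
proof -
  assume f: "finite A"
  have "(\<Sum>j\<in>A. (if int j = c then v else 0)) = (\<Sum>j\<in>A. (if j = nat c then (if c \<ge> 0 then v else 0) else 0))"
    by (rule sum.cong) auto
  also have "\<dots> = (if c \<ge> 0 \<and> nat c \<in> A then v else 0)" using f by (simp add: sum.delta)
  finally show ?thesis .
qed

lemma sum_ind_lt: "(\<Sum>j\<in>{p..<k}. (if int j = c then v else 0)) = (if int p \<le> c \<and> c < int k then v else (0::int))"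
proof -
  have "(c \<ge> 0 \<and> nat c \<in> {p..<k}) = (int p \<le> c \<and> c < int k)" by auto
  thus ?thesis using sum_ind[of "{p..<k}" c v] by simp
qed

lemma sum_ind_cl: "(\<Sum>j\<in>{p..q}. (if int j = c then v else 0)) = (if int p \<le> c \<and> c \<le> int q then v else (0::int))"
proof -
  have "(c \<ge> 0 \<and> nat c \<in> {p..q}) = (int p \<le> c \<and> c \<le> int q)" by auto
  thus ?thesis using sum_ind[of "{p..q}" c v] by simp
qed

lemma Tm_cell:
  assumes "1 \<le> i" "i \<le> int n + 1" "1 \<le> k" "k \<le> n + 1" "1 \<le> a" "a \<le> n + 1" "1 \<le> b" "b \<le> n + 1"
  shows "Tm n (cell n l a) (cell n m b) i k =
     (if 1 \<le> int n + 2 - i \<and> int n + 2 - i < int k then int l - 1 else 0)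
   + (if 1 \<le> int a - i \<and> int a - i < int k then 1 else 0)
   + (if 1 \<le> int a + int n + 1 - i \<and> int a + int n + 1 - i < int k then 1 else 0)
   + (if int k + 1 \<le> int n + 2 - i \<and> int n + 2 - i \<le> int n + 1 then int m - 1 else 0)
   + (if int k + 1 \<le> int b - i \<and> int b - i \<le> int n + 1 then 1 else 0)
   + (if int k + 1 \<le> int b + int n + 1 - i \<and> int b + int n + 1 - i \<le> int n + 1 then 1 else 0)"
proof -
  have s1: "(\<Sum>j\<in>{1..<k}. xc n (cell n l a) (i + int j)) =
     (\<Sum>j\<in>{1..<k}. (if int j = int n + 2 - i then int l - 1 else 0)
     + (if int j = int a - i then 1 else 0) + (if int j = int a + int n + 1 - i then 1 else 0))"
    by (rule sum.cong) (use assms in \<open>auto simp: xc_cell\<close>)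
  have s2: "(\<Sum>j\<in>{k+1..n+1}. xc n (cell n m b) (i + int j)) =
     (\<Sum>j\<in>{k+1..n+1}. (if int j = int n + 2 - i then int m - 1 else 0)
     + (if int j = int b - i then 1 else 0) + (if int j = int b + int n + 1 - i then 1 else 0))"
    by (rule sum.cong) (use assms in \<open>auto simp: xc_cell\<close>)
  show ?thesis unfolding Tm_def s1 s2 sum.distrib sum_ind_lt sum_ind_cl
    by (simp add: algebra_simps)
qed

lemma Q_cell:
  assumes "1 \<le> i" "i \<le> int n + 1" "2 \<le> l" "1 \<le> m" "1 \<le> a" "a \<le> n + 1" "1 \<le> b" "b \<le> n + 1"
    and ab: "b = 1 \<or> b = a + 1"
  shows "Qf n (cell n l a) (cell n m b) i = (if b = 1 then (if i < int a then 1 else 0) else (if i = int a then 0 else 1))"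
proof (rule Qf_eqI)
  let ?k0 = "nat (int n + 2 - i)"
  show "?k0 \<in> {1..n+1}" using assms by auto
  have k0: "1 \<le> ?k0" "?k0 \<le> n + 1" "int ?k0 = int n + 2 - i" using assms by auto
  show "Tm n (cell n l a) (cell n m b) i ?k0 = (if b = 1 then (if i < int a then 1 else 0) else (if i = int a then 0 else 1))"
    unfolding Tm_cell[OF assms(1,2) k0(1,2) assms(5-8)] k0(3) using assms by auto
next
  fix k assume "k \<in> {1..n+1}"
  hence k: "1 \<le> k" "k \<le> n + 1" by auto
  show "(if b = 1 then (if i < int a then 1 else 0) else (if i = int a then 0 else 1)) \<le> Tm n (cell n l a) (cell n m b) i k"
    unfolding Tm_cell[OF assms(1,2) k assms(5-8)] using assms k by auto
qed

lemma R_cell: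
  assumes "2 \<le> l" "1 \<le> m" "1 \<le> a" "a \<le> n + 1" "1 \<le> b" "b \<le> n + 1"
    and ab: "b = 1 \<or> b = a + 1"
  shows "Rmap n (cell n l a) (cell n m b) = (cell n m a, cell n l b)"
proof -
  let ?Q = "Qf n (cell n l a) (cell n m b)"
  define V where "V i = (if b = 1 then (if i < int a then 1 else 0) else (if i = int a then 0 else (1::int)))" for i
  have QV: "?Q (int i) = V (if i = 0 then int n + 1 else int i)" if "i < n + 1" for i
  proof (cases "i = 0")
    case True
    have "?Q (int n + 1) = V (int n + 1)" unfolding V_def by (rule Q_cell) (use assms in auto)
    moreover have "?Q (0 + int (n+1)) = ?Q 0" by (rule Qf_period)
    ultimately show ?thesis using True by (simp add: add.commute)
  next
    case False
    have "?Q (int i) = V (int i)" unfolding V_def by (rule Q_cell) (use assms that False in auto)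
    thus ?thesis using False by simp
  qed
  have QV1: "?Q (int i + 1) = V (int i + 1)" if "i < n + 1" for i
    unfolding V_def by (rule Q_cell) (use assms that in auto)
  have f: "fst (Rmap n (cell n l a) (cell n m b)) = cell n m a"
  proof (rule nth_equalityI)
    fix i assume "i < length (fst (Rmap n (cell n l a) (cell n m b)))"
    hence i: "i < n + 1" by (simp add: Rlen)
    show "fst (Rmap n (cell n l a) (cell n m b)) ! i = cell n m a ! i"
      unfolding Rfst_nth[OF i] QV[OF i] QV1[OF i] cell_nth[OF i] V_def using assms i by auto
  qed (simp add: Rlen)
  have s: "snd (Rmap n (cell n l a) (cell n m b)) = cell n l b"
  proof (rule nth_equalityI)
    fix i assume "i < length (snd (Rmap n (cell n l a) (cell n m b)))"
    hence i: "i < n + 1" by (simp add: Rlen)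
    show "snd (Rmap n (cell n l a) (cell n m b)) ! i = cell n l b ! i"
      unfolding Rsnd_nth[OF i] QV[OF i] QV1[OF i] cell_nth[OF i] V_def using assms i by auto
  qed (simp add: Rlen)
  show ?thesis using f s by (metis prod.collapse)
qed

definition cells :: "nat \<Rightarrow> nat list \<Rightarrow> nat list \<Rightarrow> int list list" where
  "cells n caps w = map (\<lambda>(m, a). cell n m a) (zip caps w)"

lemma cells_Nil[simp]: "cells n [] [] = []" unfolding cells_def by simp
lemma cells_Cons[simp]: "cells n (m # caps) (a # w) = cell n m a # cells n caps w" unfolding cells_def by simp
lemma cells_append: "length caps = length w \<Longrightarrow> cells n (caps @ caps') (w @ w') = cells n caps w @ cells n caps' w'"
  unfolding cells_def by simp

fun stair :: "nat \<Rightarrow> nat \<Rightarrow> nat list \<Rightarrow> bool" where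
  "stair n a [] = True"
| "stair n a (b # w) = ((b = 1 \<or> b = a + 1) \<and> 1 \<le> b \<and> b \<le> n + 1 \<and> stair n b w)"

fun Cend :: "nat \<Rightarrow> int list \<Rightarrow> int list list \<Rightarrow> int list" where
  "Cend n v [] = v"
| "Cend n v (q # qs) = Cend n (snd (Rmap n v q)) qs"

lemma Tcar_append: "Tcar n v (A @ B) = Tcar n v A @ Tcar n (Cend n v A) B"
  by (induction A arbitrary: v) auto

lemma Tcar_cells:
  assumes "2 \<le> l"
  shows "length caps = length w \<Longrightarrow> \<forall>m\<in>set caps. 1 \<le> m \<Longrightarrow> 1 \<le> a \<Longrightarrow> a \<le> n + 1 \<Longrightarrow> stair n a w \<Longrightarrow>
    Tcar n (cell n l a) (cells n caps w) = cells n caps (butlast (a # w)) \<and>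
    Cend n (cell n l a) (cells n caps w) = cell n l (last (a # w))"
proof (induction w arbitrary: a caps)
  case Nil thus ?case by simp
next
  case (Cons b w)
  then obtain m caps' where c: "caps = m # caps'" by (cases caps) auto
  have hyp: "b = 1 \<or> b = a + 1" "1 \<le> b" "b \<le> n + 1" "stair n b w" using Cons.prems by auto
  have m: "1 \<le> m" using Cons.prems c by auto
  have R: "Rmap n (cell n l a) (cell n m b) = (cell n m a, cell n l b)"
    by (rule R_cell) (use assms m Cons.prems hyp in auto)
  have IH: "Tcar n (cell n l b) (cells n caps' w) = cells n caps' (butlast (b # w)) \<and>
    Cend n (cell n l b) (cells n caps' w) = cell n l (last (b # w))"
    by (rule Cons.IH) (use Cons.prems c hyp in auto)
  show ?case using IH R c by simp
qed

lemma uvec_cell: "uvec n l = cell n l 1"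
proof (rule nth_equalityI)
  show "length (uvec n l) = length (cell n l 1)" by (simp add: uvec_def)
  fix i assume "i < length (uvec n l)"
  hence i: "i < n + 1" by (simp add: uvec_def)
  show "uvec n l ! i = cell n l 1 ! i" using cell_nth[OF i] i by (simp add: uvec_def nth_Cons')
qed

lemma cell_nn: "1 \<le> m \<Longrightarrow> nn n (cell n m a)"
  unfolding nn_iff by (auto simp: cell_nth)

lemma cells_valid: "length caps = length w \<Longrightarrow> \<forall>m\<in>set caps. 1 \<le> m \<Longrightarrow> valid n (cells n caps w)"
  unfolding valid_def cells_def by (auto simp: cell_nn dest!: set_zip_leftD)

lemma Tinf_cells:
  assumes "1 \<le> n" "length caps = length w" "\<forall>m\<in>set caps. 1 \<le> m" "stair n 1 w" "valid n B"
    "last (1 # w) = 1"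
  shows "Tinf n (cells n caps w @ B) = cells n caps (butlast (1 # w)) @ Tinf n B"
proof -
  have v: "valid n (cells n caps w @ B)" using cells_valid[OF assms(2,3)] assms(5)
    unfolding valid_def by auto
  define l where "l = max 2 (nat (sz (cells n caps w @ B)))"
  have l1: "l \<ge> nat (sz (cells n caps w @ B))" "l \<ge> 2" unfolding l_def by auto
  have szB: "sz B \<le> sz (cells n caps w @ B)" 
    using sz_nonneg[OF cells_valid[OF assms(2,3)]] unfolding sz_def by simp
  have l2: "l \<ge> nat (sz B)" using l1 szB by linarith
  have e1: "Tinf n (cells n caps w @ B) = Tcar n (cell n l 1) (cells n caps w @ B)"
    using Tinf_eq[OF assms(1) v l1(1)] by (simp add: Tl_def uvec_cell)
  have e2: "Tinf n B = Tcar n (cell n l 1) B"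
    using Tinf_eq[OF assms(1,5) l2] by (simp add: Tl_def uvec_cell)
  have TC: "Tcar n (cell n l 1) (cells n caps w) = cells n caps (butlast (1 # w)) \<and>
    Cend n (cell n l 1) (cells n caps w) = cell n l (last (1 # w))"
    by (rule Tcar_cells[OF l1(2) assms(2,3)]) (use assms(4) in auto)
  show ?thesis unfolding e1 e2 Tcar_append using TC assms(6) by simp
qed

lemma Tinf_cells0:
  assumes "1 \<le> n" "length caps = length w" "\<forall>m\<in>set caps. 1 \<le> m" "stair n 1 w"
  shows "Tinf n (cells n caps w) = cells n caps (butlast (1 # w))"
proof -
  define l where "l = max 2 (nat (sz (cells n caps w)))"
  have l1: "l \<ge> nat (sz (cells n caps w))" "l \<ge> 2" unfolding l_def by auto
  have e1: "Tinf n (cells n caps w) = Tcar n (cell n l 1) (cells n caps w)"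
    using Tinf_eq[OF assms(1) cells_valid[OF assms(2,3)] l1(1)] by (simp add: Tl_def uvec_cell)
  show ?thesis unfolding e1 using Tcar_cells[OF l1(2) assms(2,3)] assms(4) by simp
qed

definition shiftw :: "nat \<Rightarrow> nat list \<Rightarrow> nat list" where
  "shiftw s w = take (length w) (replicate s 1 @ w)"

definition cnt :: "nat list \<Rightarrow> int" where
  "cnt w = int (length (filter (\<lambda>a. 2 \<le> a) w))"

lemma stair_append: "stair n a (u @ v) = (stair n a u \<and> stair n (last (a # u)) v)"
  by (induction u arbitrary: a) auto

lemma stair_take: "stair n a w \<Longrightarrow> stair n a (take j w)"
  by (induction w arbitrary: a j) (auto simp: take_Cons')

lemma stair_rep1: "stair n c (replicate r 1)"
  by (induction r arbitrary: c) auto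

lemma stair_range: "stair n c w \<Longrightarrow> a \<in> set w \<Longrightarrow> 1 \<le> a \<and> a \<le> n + 1"
  by (induction w arbitrary: c) auto

lemma shiftw_len[simp]: "length (shiftw s w) = length w"
  unfolding shiftw_def by simp

lemma shiftw_0[simp]: "shiftw 0 w = w" unfolding shiftw_def by simp

lemma butlast_take1: "L \<le> length X \<Longrightarrow> butlast (1 # take L X) = take L (1 # X)"
proof (cases L)
  case 0 thus ?thesis by simp
next
  case (Suc L')
  assume "L \<le> length X"
  hence "take L X \<noteq> []" using Suc by (cases X) auto
  thus ?thesis using Suc \<open>L \<le> length X\<close> by (simp add: butlast_take)
qed

lemma shiftw_Suc: "shiftw (Suc s) w = butlast (1 # shiftw s w)"
  unfolding shiftw_def by (subst butlast_take1) auto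

lemma stair_butlast1: "stair n 1 u \<Longrightarrow> stair n 1 (butlast (1 # u))"
proof -
  assume "stair n 1 u"
  hence "stair n 1 (1 # u)" by simp
  hence "stair n 1 (take (length u) (1 # u))" by (rule stair_take)
  moreover have "butlast (1 # u) = take (length u) (1 # u)" by (simp add: butlast_conv_take)
  ultimately show ?thesis by simp
qed

lemma stair_shiftw: "stair n 1 w \<Longrightarrow> stair n 1 (shiftw s w)"
proof (induction s)
  case 0 thus ?case by simp
next
  case (Suc s)
  hence "stair n 1 (butlast (1 # shiftw s w))" by (intro stair_butlast1) simp
  thus ?case by (simp only: shiftw_Suc)
qed

lemma iter_cells:
  assumes "1 \<le> n" "length caps = length w" "\<forall>m\<in>set caps. 1 \<le> m" "stair n 1 w"
  shows "(Tinf n ^^ s) (cells n caps w) = cells n caps (shiftw s w)"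
proof (induction s)
  case 0 thus ?case by simp
next
  case (Suc s)
  have "Tinf n (cells n caps (shiftw s w)) = cells n caps (butlast (1 # shiftw s w))"
    by (rule Tinf_cells0[OF assms(1)]) (use assms stair_shiftw in auto)
  thus ?case using Suc by (simp add: shiftw_Suc)
qed

lemma iter_phase1:
  assumes "1 \<le> n" "length caps = length w" "\<forall>m\<in>set caps. 1 \<le> m" "stair n 1 w" "valid n B"
  shows "(\<forall>t'<t. last (1 # shiftw t' w) = 1) \<Longrightarrow>
    (Tinf n ^^ t) (cells n caps w @ B) = cells n caps (shiftw t w) @ (Tinf n ^^ t) B"
proof (induction t)
  case 0 thus ?case by simp
next
  case (Suc t)
  have IH: "(Tinf n ^^ t) (cells n caps w @ B) = cells n caps (shiftw t w) @ (Tinf n ^^ t) B"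
    using Suc by auto
  have vB: "valid n ((Tinf n ^^ t) B)" using Tinf_pow_valid[OF assms(1,5)] by blast
  have "Tinf n (cells n caps (shiftw t w) @ (Tinf n ^^ t) B) =
      cells n caps (butlast (1 # shiftw t w)) @ Tinf n ((Tinf n ^^ t) B)"
    by (rule Tinf_cells[OF assms(1)]) (use assms stair_shiftw vB Suc.prems in auto)
  thus ?case using IH by (simp add: shiftw_Suc)
qed

lemma shiftw_rep: "t \<le> R \<Longrightarrow> shiftw t (X @ replicate R 1) = replicate t 1 @ X @ replicate (R - t) 1"
  unfolding shiftw_def by (simp add: take_append min_def replicate_add[symmetric])

lemma cnt_append[simp]: "cnt (u @ v) = cnt u + cnt v" unfolding cnt_def by simp
lemma cnt_rep1[simp]: "cnt (replicate r 1) = 0" unfolding cnt_def by (induction r) auto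
lemma cnt_rep1'[simp]: "cnt (replicate r (Suc 0)) = 0" unfolding cnt_def by (induction r) auto
lemma cnt_take_rep1[simp]: "cnt (take j (replicate r 1)) = 0" by (simp add: take_replicate)

lemma cnt_shiftw: "cnt (shiftw s w) = cnt (take (length w - s) w)"
  unfolding shiftw_def by (simp add: take_append)

lemma balls_cell: "1 \<le> a \<Longrightarrow> a \<le> n + 1 \<Longrightarrow> balls n (cell n m a) = (if 2 \<le> a then 1 else 0)"
proof -
  assume a: "1 \<le> a" "a \<le> n + 1"
  have "balls n (cell n m a) = (\<Sum>a'\<in>{2..n+1}. (if a' = a then 1 else 0))"
    unfolding balls_def by (rule sum.cong) (auto simp: cell_nth)
  also have "\<dots> = (if 2 \<le> a then 1 else 0)" using a by (simp add: sum.delta)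
  finally show ?thesis .
qed

lemma bsum_cells: "length caps = length w \<Longrightarrow> stair n c w \<Longrightarrow> bsum n (cells n caps w) = cnt w"
proof (induction w arbitrary: caps c)
  case Nil thus ?case by (simp add: bsum_def cnt_def)
next
  case (Cons a w)
  then obtain m caps' where c: "caps = m # caps'" by (cases caps) auto
  have "bsum n (cells n caps' w) = cnt w" using Cons c by auto
  moreover have "balls n (cell n m a) = (if 2 \<le> a then 1 else 0)" by (rule balls_cell) (use Cons.prems in auto)
  ultimately show ?case using c by (simp add: bsum_def cnt_def)
qed

lemma init_list: "init n d q = sum_list (map (\<lambda>x. \<Sum>a\<in>{2..d}. x ! (a - 1)) q)"
  unfolding init_def by (simp add: sum_list_sum_nth atLeast0LessThan)

lemma init_append: "init n d (xs @ ys) = init n d xs + init n d ys"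
  unfolding init_list by simp

lemma cnt_Nil[simp]: "cnt [] = 0" unfolding cnt_def by simp

definition pw :: "nat \<Rightarrow> (nat \<Rightarrow> nat) \<Rightarrow> nat list" where
  "pw n M = concat (map (\<lambda>b. concat (replicate (M b) [1..<b+1])) (rev [1..<n+1]))"

definition Xw :: "nat \<Rightarrow> (nat \<Rightarrow> nat) \<Rightarrow> nat list" where
  "Xw n M = concat (map (\<lambda>b. concat (replicate (M b) [1..<b+1])) (rev [2..<n+1]))"

lemma concat_rep_single: "concat (replicate r [x]) = replicate r x"
  by (induction r) auto

lemma pw_split: "1 \<le> n \<Longrightarrow> pw n M = Xw n M @ replicate (M 1) 1"
proof -
  assume n: "1 \<le> n"
  have "[1..<n+1] = 1 # [2..<n+1]" using n upt_conv_Cons[of 1 "n+1"] by (simp add: numeral_2_eq_2)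
  moreover have "[Suc 0..<Suc (Suc 0)] = [1]" by simp
  ultimately show ?thesis unfolding pw_def Xw_def by (simp del: upt_Suc add: concat_rep_single)
qed

lemma letter_cell: "letter n a = cell n 1 a"
  unfolding letter_def cell_def by simp

lemma map_cell_cells: "map (cell n 1) w = cells n (replicate (length w) 1) w"
  by (induction w) auto

lemma pvac_cells: "pvac n M = cells n (replicate (length (pw n M)) 1) (pw n M)"
proof -
  have "pvac n M = map (letter n) (pw n M)"
    unfolding pvac_def pw_def by (simp add: map_concat comp_def)
  also have "\<dots> = map (cell n 1) (pw n M)" by (simp add: letter_cell[abs_def])
  finally show ?thesis using map_cell_cells by metis
qed

lemma stair_block: "b \<le> n + 1 \<Longrightarrow> stair n c [1..<Suc b]"
proof (induction b arbitrary: c)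
  case 0 thus ?case by simp
next
  case (Suc b)
  have A: "stair n c [1..<Suc b]" using Suc by simp
  have l: "last (c # [1..<Suc b]) = (if b = 0 then c else b)"
    by (cases b) (simp_all del: upt_Suc)
  have B: "stair n (last (c # [1..<Suc b])) [Suc b]" unfolding l using Suc.prems by auto
  have e: "[1..<Suc (Suc b)] = [1..<Suc b] @ [Suc b]" by (rule upt_Suc_append) simp
  show ?case unfolding e stair_append using A B by blast
qed

lemma stair_concat: "(\<forall>u\<in>set us. \<forall>c. stair n c u) \<Longrightarrow> stair n c (concat us)"
  by (induction us arbitrary: c) (auto simp: stair_append)

declare upt_Suc[simp del]

lemma stair_pw: "stair n c (pw n M)"
  unfolding pw_def
proof (rule stair_concat, intro ballI allI)
  fix u c assume "u \<in> set (map (\<lambda>b. concat (replicate (M b) [1..<b+1])) (rev [1..<n+1]))"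
  then obtain b where b: "b \<in> {1..<n+1}" "u = concat (replicate (M b) [1..<b+1])" by auto
  show "stair n c u" unfolding b(2)
  proof (rule stair_concat, intro ballI allI)
    fix v c' assume "v \<in> set (replicate (M b) [1..<b+1])"
    hence v: "v = [1..<Suc b]" by (simp split: if_splits)
    show "stair n c' v" unfolding v by (rule stair_block) (use b in auto)
  qed
qed

lemma cnt_block: "cnt [1..<Suc (Suc b)] = int b"
proof (induction b)
  case 0 thus ?case by (simp add: cnt_def)
next
  case (Suc b)
  have e: "[1..<Suc (Suc (Suc b))] = [1..<Suc (Suc b)] @ [Suc (Suc b)]" by (rule upt_Suc_append) simp
  show ?case unfolding e cnt_append using Suc by (simp add: cnt_def del: upt_Suc)
qed

lemma cnt_concat: "cnt (concat us) = sum_list (map cnt us)"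
  by (induction us) auto

lemma cnt_Xw: "cnt (Xw n M) = int (L1 n M)"
proof -
  have blk: "cnt (concat (replicate (M b) [1..<b+1])) = int (M b) * (int b - 1)" if "b \<in> set (rev [2..<n+1])" for b
  proof -
    have "2 \<le> b" using that by simp
    then obtain b' where b': "b = Suc (Suc b')" by (metis add_2_eq_Suc le_Suc_ex)
    show ?thesis unfolding cnt_concat map_replicate sum_list_replicate b' using cnt_block[of "Suc b'"] by simp
  qed
  have "cnt (Xw n M) = sum_list (map (\<lambda>b. cnt (concat (replicate (M b) [1..<b+1]))) (rev [2..<n+1]))"
    unfolding Xw_def by (subst cnt_concat) (simp only: map_map comp_def)
  also have "\<dots> = sum_list (map (\<lambda>b. int (M b) * (int b - 1)) (rev [2..<n+1]))"
    by (intro arg_cong[where f = sum_list] map_cong refl) (rule blk)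
  also have "\<dots> = (\<Sum>b\<in>{2..<n+1}. int (M b) * (int b - 1))"
    by (simp only: rev_map[symmetric] sum_list_rev sum_set_upt_conv_sum_list_nat[symmetric] set_upt)
  also have "\<dots> = (\<Sum>b\<in>{2..n}. int ((b - 1) * M b))"
    by (rule sum.cong) (auto simp: of_nat_diff)
  also have "\<dots> = int (L1 n M)" unfolding L1_def by (simp only: of_nat_sum)
  finally show ?thesis .
qed

lemma bsum_append: "bsum n (xs @ ys) = bsum n xs + bsum n ys" unfolding bsum_def by simp

lemma zero_box:
  assumes "nn n q" "balls n q = 0"
  shows "q = cell n (nat (sum_list q)) 1"
proof -
  have lq: "length q = n + 1" using assms(1) nn_def by auto
  have nz: "\<forall>a\<in>{2..n+1}. q ! (a - 1) = 0"
    using assms(2) unfolding balls_def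
    by (subst sum_nonneg_eq_0_iff[symmetric]) (use assms(1) in \<open>auto simp: nn_iff\<close>)
  have s: "sum_list q = q ! 0 + balls n q" by (rule sum_balls[OF lq])
  have q0: "q ! 0 \<ge> 0" using assms(1) by (auto simp: nn_iff)
  show ?thesis
  proof (rule nth_equalityI)
    show "length q = length (cell n (nat (sum_list q)) 1)" using lq by simp
    fix i assume "i < length q"
    hence i: "i < n + 1" using lq by simp
    show "q ! i = cell n (nat (sum_list q)) 1 ! i"
    proof (cases "i = 0")
      case True thus ?thesis using cell_nth[OF i] s assms(2) q0 by simp
    next
      case False
      hence "Suc i \<in> {2..n+1}" using i by auto
      hence "q ! i = 0" using nz by (metis diff_Suc_1)
      thus ?thesis using cell_nth[OF i] False by simp
    qed
  qed
qed

lemma vac_state: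
  assumes "1 \<le> n" "valid n P"
  shows "(Tinf n ^^ length P) P = cells n (map (\<lambda>q. nat (sum_list q)) P) (replicate (length P) 1)"
proof -
  let ?S = "(Tinf n ^^ length P) P"
  have vS: "valid n ?S" and mS: "map sum_list ?S = map sum_list P" using Tinf_pow_valid[OF assms] by auto
  have lS: "length ?S = length P" using mS by (metis length_map)
  have b0: "bsum n ?S = 0" by (rule vanish_all[OF assms]) simp
  have bz: "\<forall>x\<in>set (map (balls n) ?S). x = 0"
    using b0 unfolding bsum_def
    by (subst sum_list_nonneg_eq_0_iff[symmetric]) (use vS in \<open>auto simp: valid_def intro: balls_nonneg\<close>)
  show ?thesis
  proof (rule nth_equalityI)
    show "length ?S = length (cells n (map (\<lambda>q. nat (sum_list q)) P) (replicate (length P) 1))"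
      using lS by (simp add: cells_def)
    fix j assume "j < length ?S"
    hence j: "j < length P" using lS by simp
    have nnj: "nn n (?S ! j)" using vS j lS unfolding valid_def by simp
    have bj: "balls n (?S ! j) = 0" using bz j lS by simp
    have sj: "sum_list (?S ! j) = sum_list (P ! j)" using mS j lS by (metis nth_map)
    have "?S ! j = cell n (nat (sum_list (?S ! j))) 1" by (rule zero_box[OF nnj bj])
    thus "?S ! j = cells n (map (\<lambda>q. nat (sum_list q)) P) (replicate (length P) 1) ! j"
      using sj j by (simp add: cells_def)
  qed
qed

theorem lemma7p3:
  fixes n :: nat and p :: "int list list" and lam :: "nat \<Rightarrow> nat"
  assumes "n \<ge> 1"
    and "\<forall>j<length p. lam j \<ge> 1 \<and> inB n (lam j) (p ! j)"
  shows "\<exists>N. \<forall>M :: nat \<Rightarrow> nat. (\<forall>b\<in>{1..n}. M b \<ge> N) \<longrightarrow>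
           (\<forall>k\<in>{1..length p}. \<forall>i\<in>{1..n+1}.
              rho n i (pvac n M @ take k p) =
                rho n i (pvac n M) + int (L1 n M) * int k + rho n i (take k p))"
proof (intro exI allI impI ballI)
  fix M :: "nat \<Rightarrow> nat" and k i
  assume MN: "\<forall>b\<in>{1..n}. M b \<ge> length p + 1" and kr: "k \<in> {1..length p}" and ir: "i \<in> {1..n+1}"
  have n1: "1 \<le> n" using assms(1) .
  define P where "P = take k p"
  have lenP: "length P = k" using kr unfolding P_def by auto
  have k1: "1 \<le> k" using kr by simp
  have validP: "valid n P" unfolding valid_def
  proof
    fix q assume "q \<in> set P"
    then obtain j where j: "j < length P" "q = P ! j" by (metis in_set_conv_nth)
    have "j < length p" "P ! j = p ! j" using j kr unfolding P_def by auto
    thus "nn n q" using assms(2) j unfolding inB_def nn_def by auto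
  qed
  define capsP where "capsP = map (\<lambda>q. nat (sum_list q)) P"
  have capsP1: "\<forall>m\<in>set capsP. 1 \<le> m"
  proof
    fix m assume "m \<in> set capsP"
    then obtain j where j: "j < length P" "m = nat (sum_list (P ! j))" unfolding capsP_def
      by (auto simp: in_set_conv_nth)
    have "j < length p" "P ! j = p ! j" using j kr unfolding P_def by auto
    thus "1 \<le> m" using assms(2) j unfolding inB_def by auto
  qed
  have lcapsP: "length capsP = k" unfolding capsP_def using lenP by simp
  define X where "X = Xw n M"
  define R where "R = M 1"
  define w where "w = pw n M"
  define L0 where "L0 = length w"
  define ones where "ones = replicate L0 (1::nat)"
  have wX: "w = X @ replicate R 1" unfolding w_def X_def R_def by (rule pw_split[OF n1])
  have kR: "k < R" using MN kr n1 unfolding R_def by force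
  have V: "pvac n M = cells n ones w" unfolding ones_def L0_def w_def by (rule pvac_cells)
  have stw: "stair n c w" for c unfolding w_def by (rule stair_pw)
  have lenX: "length X + R = L0" unfolding L0_def wX by simp
  have ones1: "\<forall>m\<in>set ones. 1 \<le> m" unfolding ones_def by simp
  have lones: "length ones = length w" unfolding ones_def L0_def by simp
  define Gw where "Gw s = cnt (take (L0 - s) w)" for s
  have Gw_small: "Gw s = int (L1 n M)" if "s \<le> R" for s
  proof -
    have "take (L0 - s) w = X @ take (L0 - s - length X) (replicate R 1)"
      unfolding wX using that lenX by (simp add: take_append)
    thus ?thesis unfolding Gw_def X_def using cnt_Xw by simp
  qed
  have Gw_big: "Gw s = 0" if "L0 \<le> s" for s unfolding Gw_def using that by simp
  have iterV: "(Tinf n ^^ t) (pvac n M) = cells n ones (shiftw t w)" for t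
    unfolding V by (rule iter_cells[OF n1 lones ones1 stw])
  have GV: "bsum n ((Tinf n ^^ t) (pvac n M)) = Gw t" for t
  proof -
    have "bsum n (cells n ones (shiftw t w)) = cnt (shiftw t w)"
      by (rule bsum_cells[of _ _ _ 1]) (use lones stair_shiftw[OF stw] in auto)
    thus ?thesis unfolding iterV Gw_def cnt_shiftw L0_def .
  qed
  have rhoV: "rho n i (pvac n M) = init n i (pvac n M) + (\<Sum>t\<in>{1..<L0}. Gw t)"
    using rho_fin[of L0 n "pvac n M" i] GV Gw_big by simp
  have rhoP: "rho n i P = init n i P + (\<Sum>t\<in>{1..<k}. bsum n ((Tinf n ^^ t) P))"
    by (rule rho_fin) (use vanish_all[OF n1 validP] lenP in auto)
  have lastok: "\<forall>t'<t. last (1 # shiftw t' w) = 1" if "t \<le> k" for t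
  proof (intro allI impI)
    fix t' assume "t' < t"
    hence t': "t' < R" using that kR by simp
    have "shiftw t' w = replicate t' 1 @ X @ replicate (R - t') 1" unfolding wX
      by (rule shiftw_rep) (use t' in simp)
    moreover have "R - t' = Suc (R - t' - 1)" using t' by simp
    ultimately show "last (1 # shiftw t' w) = 1" by (simp del: replicate_Suc)
  qed
  have phase1: "(Tinf n ^^ t) (cells n ones w @ P) = cells n ones (shiftw t w) @ (Tinf n ^^ t) P"
    if "t \<le> k" for t
    by (rule iter_phase1[OF n1 lones ones1 stw validP lastok[OF that]])
  define W where "W = replicate k (1::nat) @ w"
  have shk: "shiftw k w @ replicate k 1 = W"
  proof -
    have "shiftw k w = replicate k 1 @ X @ replicate (R - k) 1" unfolding wX
      by (rule shiftw_rep) (use kR in simp)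
    moreover have "replicate (R - k) (1::nat) @ replicate k 1 = replicate R 1"
      using kR by (simp add: replicate_add[symmetric])
    ultimately show ?thesis unfolding W_def wX by simp
  qed
  define caps where "caps = ones @ capsP"
  have stateK: "(Tinf n ^^ k) (cells n ones w @ P) = cells n caps W"
  proof -
    have "(Tinf n ^^ k) P = cells n capsP (replicate k 1)"
      using vac_state[OF n1 validP] lenP unfolding capsP_def by simp
    thus ?thesis unfolding phase1[OF order_refl] caps_def shk[symmetric]
      by (simp add: cells_append lones)
  qed
  have stW: "stair n 1 W" unfolding W_def stair_append using stair_rep1 stw by blast
  have lcaps: "length caps = length W" unfolding caps_def W_def using lones lcapsP by simp
  have caps1: "\<forall>m\<in>set caps. 1 \<le> m" unfolding caps_def using ones1 capsP1 by auto
  have phase2: "(Tinf n ^^ (s + k)) (cells n ones w @ P) = cells n caps (shiftw s W)" for s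
    unfolding funpow_add comp_def stateK by (rule iter_cells[OF n1 lcaps caps1 stW])
  define GC where "GC t = bsum n ((Tinf n ^^ t) (pvac n M @ P))" for t
  have GC_small: "GC t = Gw t + bsum n ((Tinf n ^^ t) P)" if "t \<le> k" for t
  proof -
    have "bsum n (cells n ones (shiftw t w)) = cnt (shiftw t w)"
      by (rule bsum_cells[of _ _ _ 1]) (use lones stair_shiftw[OF stw] in auto)
    thus ?thesis unfolding GC_def V phase1[OF that] bsum_append Gw_def cnt_shiftw L0_def by simp
  qed
  have GC_big: "GC (s + k) = Gw s" for s
  proof -
    have "bsum n (cells n caps (shiftw s W)) = cnt (shiftw s W)"
      by (rule bsum_cells[of _ _ _ 1]) (use lcaps stair_shiftw[OF stW] in auto)
    also have "\<dots> = cnt (take (length W - s) W)" by (rule cnt_shiftw)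
    also have "\<dots> = Gw s" unfolding W_def Gw_def L0_def by (simp add: take_append)
    finally show ?thesis unfolding GC_def V phase2 .
  qed
  have rhoC: "rho n i (pvac n M @ P) = init n i (pvac n M @ P) + (\<Sum>t\<in>{1..<k + L0}. GC t)"
  proof -
    have "bsum n ((Tinf n ^^ t) (pvac n M @ P)) = 0" if "t \<ge> k + L0" for t
    proof -
      have "GC ((t - k) + k) = Gw (t - k)" by (rule GC_big)
      thus ?thesis using that Gw_big[of "t - k"] unfolding GC_def by simp
    qed
    thus ?thesis using rho_fin[of "k + L0" n "pvac n M @ P" i] unfolding GC_def by simp
  qed
  have L0pos: "0 < L0" using lenX kR by simp
  have S1: "(\<Sum>t\<in>{1..<k + L0}. GC t) = (\<Sum>t\<in>{1..<k}. GC t) + (\<Sum>t\<in>{k..<k + L0}. GC t)"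
    using sum.atLeastLessThan_concat[of 1 k "k + L0" GC] k1 by simp
  have S2: "(\<Sum>t\<in>{k..<k + L0}. GC t) = (\<Sum>s\<in>{0..<L0}. Gw s)"
  proof -
    have "(\<Sum>t\<in>{0 + k..<L0 + k}. GC t) = (\<Sum>s\<in>{0..<L0}. GC (s + k))"
      by (rule sum.shift_bounds_nat_ivl)
    thus ?thesis using GC_big by (simp add: add.commute)
  qed
  have S3: "(\<Sum>s\<in>{0..<L0}. Gw s) = Gw 0 + (\<Sum>s\<in>{1..<L0}. Gw s)"
    using sum.atLeast_Suc_lessThan[OF L0pos, of Gw] by simp
  have S4: "(\<Sum>t\<in>{1..<k}. GC t) = (\<Sum>t\<in>{1..<k}. int (L1 n M)) + (\<Sum>t\<in>{1..<k}. bsum n ((Tinf n ^^ t) P))"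
  proof -
    have "(\<Sum>t\<in>{1..<k}. GC t) = (\<Sum>t\<in>{1..<k}. int (L1 n M) + bsum n ((Tinf n ^^ t) P))"
      by (rule sum.cong) (use GC_small Gw_small kR in auto)
    thus ?thesis by (simp add: sum.distrib)
  qed
  have G0: "Gw 0 = int (L1 n M)" by (rule Gw_small) simp
  have "rho n i (pvac n M @ P) = rho n i (pvac n M) + int (L1 n M) * int k + rho n i P"
    unfolding rhoC rhoV rhoP init_append S1 S2 S3 S4 G0 using k1
    by (simp add: of_nat_diff algebra_simps)
  thus "rho n i (pvac n M @ take k p) = rho n i (pvac n M) + int (L1 n M) * int k + rho n i (take k p)"
    unfolding P_def .
qed

end
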